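(* The standard parabolic faces of $\mathbf P$ are in bijection with the connected subdiagrams of the extended Dynkin diagram that contain $\{-\lambda\}$, via $F_I\mapsto$ the connected component containing $\{-\lambda\}$ of the induced subdiagram on $\{\alpha_j\mid j\notin I\}\cup\{-\lambda\}$ (whose set of simple-root vertices is indexed by $\overline I^0$). This bijection is an isomorphism of posets, where faces and subdiagrams are both ordered by inclusion.
   Context: Let $\mathfrak g$ be a finite-dimensional complex simple Lie algebra with root system $\Phi$, base $\Pi=\{\alpha_1,\dots,\alpha_n\}$, Weyl group $W$; $E$ is the real span of $\Pi$ with $W$-invariant inner product $(\cdot,\cdot)$. Fix a dominant integral weight $\lambda=\sum_i m_i\alpha_i$; for $x\in E$, $c_i(x)$ is the coefficient of $\alpha_i$ in $x$. Weight polytope $\mathbf P=\mathrm{conv}(W\lambda)$. For $I\subseteq\{1,\dots,n\}$, $F_I=\{x\in\mathbf P\mid c_i(x)=m_i\ \forall i\in I\}$ ($F_\emptyset=\mathbf P$); a face of $\mathbf P$ is standard parabolic if it equals $F_I$ for some $I$ (i.e. it is an intersection of the coordinate faces $F_{\{i\}}$). The extended Dynkin diagram is the Dynkin diagram of $\Pi$ with an additional node $\{-\lambda\}$ joined by a single edge to $\alpha_i$ iff $(\lambda,\alpha_i)>0$; subdiagrams are induced subdiagrams on vertex subsets. $\overline I^0$ denotes the set of indices $j$ with $\alpha_j$ in the connected component containing $\{-\lambda\}$ of the induced subdiagram on $\{\alpha_j\mid j\notin I\}\cup\{-\lambda\}$. *)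

theory Defs
  imports "HOL-Analysis.Analysis"
begin

definition refl :: "'a::real_inner \<Rightarrow> 'a \<Rightarrow> 'a" where
  "refl a x = x - (2 * (x \<bullet> a) / (a \<bullet> a)) *\<^sub>R a"

text \<open>Irreducible reduced crystallographic root system spanning the ambient space
  (= root system of a finite-dimensional complex simple Lie algebra).\<close>
definition irreducible_root_system :: "'a::euclidean_space set \<Rightarrow> bool" where
  "irreducible_root_system Phi \<longleftrightarrow>
     finite Phi \<and> Phi \<noteq> {} \<and> 0 \<notin> Phi \<and> span Phi = UNIV \<and>
     (\<forall>a\<in>Phi. refl a ` Phi = Phi) \<and>
     (\<forall>a\<in>Phi. \<forall>b\<in>Phi. 2 * (b \<bullet> a) / (a \<bullet> a) \<in> \<int>) \<and>
     (\<forall>a\<in>Phi. \<forall>c::real. c *\<^sub>R a \<in> Phi \<longrightarrow> c = 1 \<or> c = -1) \<and>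
     (\<forall>A B. A \<union> B = Phi \<and> A \<inter> B = {} \<and> (\<forall>a\<in>A. \<forall>b\<in>B. a \<bullet> b = 0)
        \<longrightarrow> A = {} \<or> B = {})"

definition is_base :: "'a::euclidean_space set \<Rightarrow> ('i::finite \<Rightarrow> 'a) \<Rightarrow> bool" where
  "is_base Phi alpha \<longleftrightarrow>
     inj alpha \<and> range alpha \<subseteq> Phi \<and> independent (range alpha) \<and>
     (\<forall>b\<in>Phi. \<exists>c::'i \<Rightarrow> int. b = (\<Sum>i\<in>UNIV. of_int (c i) *\<^sub>R alpha i) \<and>
        ((\<forall>i. c i \<ge> 0) \<or> (\<forall>i. c i \<le> 0)))"

inductive_set weyl_group :: "'a::real_inner set \<Rightarrow> ('a \<Rightarrow> 'a) set" for Phi where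
  weyl_id: "id \<in> weyl_group Phi"
| weyl_step: "w \<in> weyl_group Phi \<Longrightarrow> a \<in> Phi \<Longrightarrow> refl a \<circ> w \<in> weyl_group Phi"

definition dominant_integral :: "('i \<Rightarrow> 'a::real_inner) \<Rightarrow> 'a \<Rightarrow> bool" where
  "dominant_integral alpha lam \<longleftrightarrow>
     (\<forall>i. 2 * (lam \<bullet> alpha i) / (alpha i \<bullet> alpha i) \<in> \<nat>)"

definition coeff_of :: "('i::finite \<Rightarrow> 'a::real_vector) \<Rightarrow> 'a \<Rightarrow> 'i \<Rightarrow> real" where
  "coeff_of alpha x = (THE c. x = (\<Sum>j\<in>UNIV. c j *\<^sub>R alpha j))"

definition weight_polytope :: "'a::real_inner set \<Rightarrow> 'a \<Rightarrow> 'a set" where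
  "weight_polytope Phi lam = convex hull ((\<lambda>w. w lam) ` weyl_group Phi)"

definition F_face :: "'a::euclidean_space set \<Rightarrow> ('i::finite \<Rightarrow> 'a) \<Rightarrow> 'a \<Rightarrow> 'i set \<Rightarrow> 'a set" where
  "F_face Phi alpha lam I =
     {x \<in> weight_polytope Phi lam. \<forall>i\<in>I. coeff_of alpha x i = coeff_of alpha lam i}"

definition std_parabolic_faces :: "'a::euclidean_space set \<Rightarrow> ('i::finite \<Rightarrow> 'a) \<Rightarrow> 'a \<Rightarrow> 'a set set" where
  "std_parabolic_faces Phi alpha lam =
     {F. F face_of weight_polytope Phi lam \<and> (\<exists>I. F = F_face Phi alpha lam I)}"

text \<open>Vertices: \<open>None\<close> is the extra node \<open>{-\<lambda>}\<close>, \<open>Some i\<close> is \<open>alpha i\<close>.\<close>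
definition ext_adj :: "('i \<Rightarrow> 'a::real_inner) \<Rightarrow> 'a \<Rightarrow> 'i option \<Rightarrow> 'i option \<Rightarrow> bool" where
  "ext_adj alpha lam u v =
     (case (u, v) of
        (Some i, Some j) \<Rightarrow> i \<noteq> j \<and> alpha i \<bullet> alpha j \<noteq> 0
      | (None, Some j) \<Rightarrow> lam \<bullet> alpha j > 0
      | (Some i, None) \<Rightarrow> lam \<bullet> alpha i > 0
      | (None, None) \<Rightarrow> False)"

definition induced_rel :: "('v \<Rightarrow> 'v \<Rightarrow> bool) \<Rightarrow> 'v set \<Rightarrow> ('v \<times> 'v) set" where
  "induced_rel adj S = {(u, v). u \<in> S \<and> v \<in> S \<and> adj u v}"

definition connected_sub :: "('v \<Rightarrow> 'v \<Rightarrow> bool) \<Rightarrow> 'v set \<Rightarrow> bool" where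
  "connected_sub adj S \<longleftrightarrow> S \<noteq> {} \<and> (\<forall>u\<in>S. \<forall>v\<in>S. (u, v) \<in> (induced_rel adj S)\<^sup>*)"

definition component_of :: "('v \<Rightarrow> 'v \<Rightarrow> bool) \<Rightarrow> 'v set \<Rightarrow> 'v \<Rightarrow> 'v set" where
  "component_of adj S v = {w \<in> S. (v, w) \<in> (induced_rel adj S)\<^sup>*}"

definition conn_subdiagrams_ext :: "('i \<Rightarrow> 'a::real_inner) \<Rightarrow> 'a \<Rightarrow> 'i option set set" where
  "conn_subdiagrams_ext alpha lam = {S. None \<in> S \<and> connected_sub (ext_adj alpha lam) S}"

definition ext_component :: "('i \<Rightarrow> 'a::real_inner) \<Rightarrow> 'a \<Rightarrow> 'i set \<Rightarrow> 'i option set" where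
  "ext_component alpha lam I =
     component_of (ext_adj alpha lam) (insert None (Some ` (- I))) None"

end

theory Submission
  imports Defs
begin

locale RS =
  fixes Phi :: "'a::euclidean_space set" and alpha :: "'i::finite \<Rightarrow> 'a" and lam :: 'a
  assumes irr: "irreducible_root_system Phi" and base: "is_base Phi alpha"
    and dom: "dominant_integral alpha lam"
begin

abbreviation "c \<equiv> coeff_of alpha"

lemma alpha_in: "alpha i \<in> Phi" using base unfolding is_base_def by auto
lemma zero_notin: "0 \<notin> Phi" using irr unfolding irreducible_root_system_def by auto
lemma alpha_nz: "alpha i \<noteq> 0" using alpha_in zero_notin by metis
lemma alpha_sq: "alpha i \<bullet> alpha i > 0" using alpha_nz by simp

lemma span_alpha: "span (range alpha) = UNIV"
proof -
  have "Phi \<subseteq> span (range alpha)"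
  proof
    fix b assume "b \<in> Phi"
    then obtain cc :: "'i \<Rightarrow> int" where "b = (\<Sum>i\<in>UNIV. of_int (cc i) *\<^sub>R alpha i)"
      using base unfolding is_base_def by blast
    then show "b \<in> span (range alpha)"
      by (simp add: span_sum span_scale span_base)
  qed
  then have "span Phi \<subseteq> span (range alpha)" by (simp add: span_minimal)
  then show ?thesis using irr unfolding irreducible_root_system_def by auto
qed

lemma repr_exists: "\<exists>u. x = (\<Sum>j\<in>UNIV. u j *\<^sub>R alpha j)"
proof -
  have inj: "inj alpha" using base unfolding is_base_def by auto
  have "x \<in> span (range alpha)" using span_alpha by auto
  then obtain u where "x = (\<Sum>v\<in>range alpha. u v *\<^sub>R v)"
    using span_finite[of "range alpha"] by auto
  also have "\<dots> = (\<Sum>j\<in>UNIV. u (alpha j) *\<^sub>R alpha j)"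
    by (simp add: sum.reindex[OF inj])
  finally show ?thesis by (rule exI[where x="\<lambda>j. u (alpha j)"])
qed

lemma repr_unique:
  assumes "(\<Sum>j\<in>UNIV. u j *\<^sub>R alpha j) = (\<Sum>j\<in>UNIV. v j *\<^sub>R alpha j)"
  shows "u = v"
proof (rule ccontr)
  assume ne: "u \<noteq> v"
  have inj: "inj alpha" and ind: "independent (range alpha)"
    using base unfolding is_base_def by auto
  define e where "e = (\<lambda>y. u (inv alpha y) - v (inv alpha y))"
  have "(\<Sum>y\<in>range alpha. e y *\<^sub>R y) = (\<Sum>j\<in>UNIV. e (alpha j) *\<^sub>R alpha j)"
    by (simp add: sum.reindex[OF inj])
  also have "\<dots> = (\<Sum>j\<in>UNIV. (u j - v j) *\<^sub>R alpha j)"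
    by (simp add: e_def inv_f_f[OF inj])
  also have "\<dots> = 0" using assms by (simp add: scaleR_diff_left sum_subtractf)
  finally have z: "(\<Sum>y\<in>range alpha. e y *\<^sub>R y) = 0" .
  from ne obtain j where "u j \<noteq> v j" by auto
  then have "\<exists>y\<in>range alpha. e y \<noteq> 0" by (auto simp: e_def inv_f_f[OF inj])
  then have "dependent (range alpha)" using z dependent_finite[of "range alpha"] by auto
  then show False using ind by simp
qed

lemma coeff_eq: "x = (\<Sum>j\<in>UNIV. u j *\<^sub>R alpha j) \<Longrightarrow> c x = u"
  unfolding coeff_of_def
  by (rule the_equality) (auto intro: repr_unique)

lemma coeff_repr: "x = (\<Sum>j\<in>UNIV. c x j *\<^sub>R alpha j)"
proof -
  obtain u where "x = (\<Sum>j\<in>UNIV. u j *\<^sub>R alpha j)" using repr_exists by blast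
  then show ?thesis using coeff_eq by metis
qed

lemma coeff_add: "c (x + y) = (\<lambda>j. c x j + c y j)"
  by (rule coeff_eq) (subst coeff_repr[of x], subst coeff_repr[of y], simp add: scaleR_add_left sum.distrib)

lemma coeff_scale: "c (r *\<^sub>R x) = (\<lambda>j. r * c x j)"
  by (rule coeff_eq) (subst coeff_repr[of x], simp add: scaleR_sum_right)

lemma coeff_diff: "c (x - y) = (\<lambda>j. c x j - c y j)"
  by (rule coeff_eq) (subst coeff_repr[of x], subst coeff_repr[of y], simp add: scaleR_diff_left sum_subtractf)

lemma coeff_zero: "c 0 = (\<lambda>j. 0)"
  by (rule coeff_eq) simp

lemma coeff_sum: "finite A \<Longrightarrow> c (\<Sum>a\<in>A. f a) = (\<lambda>j. \<Sum>a\<in>A. c (f a) j)"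
  by (induction A rule: finite_induct) (auto simp: coeff_zero coeff_add)

lemma coeff_alpha: "c (alpha k) = (\<lambda>j. if j = k then 1 else 0)"
  by (rule coeff_eq) (simp add: if_distrib[of "\<lambda>r. r *\<^sub>R _"] cong: if_cong)

lemma linear_coeff: "linear (\<lambda>x. c x j)"
  by (rule linearI) (simp_all add: coeff_add coeff_scale)

lemma coeff_inner: "\<exists>w. \<forall>x. c x j = w \<bullet> x"
proof -
  define w where "w = (\<Sum>b\<in>Basis. c b j *\<^sub>R b)"
  have "c x j = w \<bullet> x" for x
  proof -
    have "c x j = c (\<Sum>b\<in>Basis. (x \<bullet> b) *\<^sub>R b) j" by (simp add: euclidean_representation)
    also have "\<dots> = (\<Sum>b\<in>Basis. (x \<bullet> b) * c b j)" by (simp add: coeff_sum coeff_scale)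
    also have "\<dots> = w \<bullet> x" by (simp add: w_def inner_sum_right inner_commute mult.commute)
    finally show ?thesis .
  qed
  then show ?thesis by blast
qed


subsection \<open>Reflections\<close>

lemma refl_linear: "linear (refl a)"
  unfolding refl_def by (rule linearI) (auto simp: algebra_simps inner_add_left add_divide_distrib scaleR_add_left diff_divide_distrib)

lemma refl_inner: "refl a x \<bullet> refl a y = x \<bullet> y"
proof (cases "a = 0")
  case True then show ?thesis by (simp add: refl_def)
next
  case False
  then have "a \<bullet> a \<noteq> 0" by simp
  then show ?thesis unfolding refl_def
    by (simp add: inner_diff_left inner_diff_right inner_commute field_simps power2_eq_square)
qed

lemma refl_refl: "refl a (refl a x) = x"
proof (cases "a = 0")
  case True then show ?thesis by (simp add: refl_def)
next
  case False
  then have "a \<bullet> a \<noteq> 0" by simp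
  then show ?thesis unfolding refl_def
    by (simp add: inner_diff_left algebra_simps)
qed

lemma refl_self: "a \<noteq> 0 \<Longrightarrow> refl a a = - a"
  unfolding refl_def by (simp add: algebra_simps) (metis scaleR_2 scaleR_add_left diff_add_cancel minus_diff_eq add_diff_cancel_right')

lemma refl_orth: "x \<bullet> a = 0 \<Longrightarrow> refl a x = x"
  unfolding refl_def by simp

lemma refl_neg: "refl (- a) = refl a"
  unfolding refl_def by (auto simp: fun_eq_iff)

lemma refl_conj:
  assumes "linear w" "\<And>x y. w x \<bullet> w y = x \<bullet> y"
  shows "refl (w a) (w x) = w (refl a x)"
  unfolding refl_def using assms by (simp add: linear_diff linear_scale)

lemma refl_fixed: "refl a x = x \<Longrightarrow> a \<noteq> 0 \<Longrightarrow> x \<bullet> a = 0"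
  unfolding refl_def by auto

lemma refl_Phi: "a \<in> Phi \<Longrightarrow> refl a ` Phi = Phi"
  using irr unfolding irreducible_root_system_def by auto

lemma refl_in_Phi: "a \<in> Phi \<Longrightarrow> b \<in> Phi \<Longrightarrow> refl a b \<in> Phi"
  using refl_Phi by blast

lemma integral: "a \<in> Phi \<Longrightarrow> b \<in> Phi \<Longrightarrow> 2 * (b \<bullet> a) / (a \<bullet> a) \<in> \<int>"
  using irr unfolding irreducible_root_system_def by auto

lemma reduced: "a \<in> Phi \<Longrightarrow> r *\<^sub>R a \<in> Phi \<Longrightarrow> r = 1 \<or> r = -1"
  using irr unfolding irreducible_root_system_def by auto

lemma Phi_finite: "finite Phi"
  using irr unfolding irreducible_root_system_def by auto

lemma span_Phi: "span Phi = UNIV"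
  using irr unfolding irreducible_root_system_def by auto

subsection \<open>Weyl groups\<close>

lemma weyl_props:
  assumes "w \<in> weyl_group A" "A \<subseteq> Phi"
  shows "linear w \<and> (\<forall>x y. w x \<bullet> w y = x \<bullet> y) \<and> w ` Phi \<subseteq> Phi"
  using assms(1)
proof induction
  case weyl_id then show ?case by (simp add: id_def linear_id[unfolded id_def])
next
  case (weyl_step w a)
  then have aP: "a \<in> Phi" using assms(2) by auto
  have "linear (refl a \<circ> w)" using weyl_step by (intro linear_compose refl_linear) auto
  then show ?case using weyl_step refl_in_Phi[OF aP]
    by (auto simp: refl_inner image_subset_iff o_def)
qed

lemma weyl_mono: "w \<in> weyl_group A \<Longrightarrow> A \<subseteq> B \<Longrightarrow> w \<in> weyl_group B"
  by (induction rule: weyl_group.induct) (auto intro: weyl_group.intros)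

lemma weyl_comp: "w \<in> weyl_group A \<Longrightarrow> v \<in> weyl_group A \<Longrightarrow> w \<circ> v \<in> weyl_group A"
  by (induction rule: weyl_group.induct) (auto simp: o_assoc[symmetric] intro: weyl_group.intros)

lemma weyl_refl: "a \<in> A \<Longrightarrow> refl a \<in> weyl_group A"
  using weyl_step[OF weyl_id] by fastforce

lemma weyl_finite: assumes "A \<subseteq> Phi" shows "finite (weyl_group A)"
proof -
  have "inj_on (\<lambda>w. restrict w Phi) (weyl_group A)"
  proof (rule inj_onI)
    fix w v assume w: "w \<in> weyl_group A" and v: "v \<in> weyl_group A"
      and eq: "restrict w Phi = restrict v Phi"
    have lw: "linear w" and lv: "linear v" using weyl_props[OF w assms] weyl_props[OF v assms] by auto
    have "w x = v x" for x
    proof (rule linear_eq_on[OF lw lv])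
      show "x \<in> span Phi" using span_Phi by auto
      show "\<And>b. b \<in> Phi \<Longrightarrow> w b = v b" using eq by (metis restrict_apply')
    qed
    then show "w = v" by auto
  qed
  moreover have "(\<lambda>w. restrict w Phi) ` weyl_group A \<subseteq> Phi \<rightarrow>\<^sub>E Phi"
  proof
    fix f assume "f \<in> (\<lambda>w. restrict w Phi) ` weyl_group A"
    then obtain w where "w \<in> weyl_group A" "f = restrict w Phi" by auto
    then show "f \<in> Phi \<rightarrow>\<^sub>E Phi" using weyl_props[OF _ assms, of w] by auto
  qed
  moreover have "finite (Phi \<rightarrow>\<^sub>E Phi)" using Phi_finite by (simp add: finite_PiE)
  ultimately show ?thesis using finite_imageD finite_subset by metis
qed

subsection \<open>Roots and coefficients\<close>

definition pos :: "'a \<Rightarrow> bool" where "pos x \<longleftrightarrow> (\<forall>j. c x j \<ge> 0)"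

lemma root_coeffs: assumes "b \<in> Phi"
  shows "(\<forall>j. c b j \<in> \<int>) \<and> ((\<forall>j. c b j \<ge> 0) \<or> (\<forall>j. c b j \<le> 0))"
proof -
  obtain cc :: "'i \<Rightarrow> int" where b: "b = (\<Sum>i\<in>UNIV. of_int (cc i) *\<^sub>R alpha i)"
    and s: "(\<forall>i. cc i \<ge> 0) \<or> (\<forall>i. cc i \<le> 0)"
    using base assms unfolding is_base_def by blast
  have "c b = (\<lambda>i. of_int (cc i))" using coeff_eq[OF b] .
  then show ?thesis using s by auto
qed

lemma root_nz: "b \<in> Phi \<Longrightarrow> b \<noteq> 0" using zero_notin by auto

lemma coeff_zero_iff: "(\<forall>j. c x j = 0) \<longleftrightarrow> x = 0"
  using coeff_repr[of x] coeff_zero by auto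

lemma root_pos_or_neg: "b \<in> Phi \<Longrightarrow> pos b \<or> pos (- b)"
  using root_coeffs[of b] unfolding pos_def
  by (auto simp: coeff_scale[of "-1", simplified])

lemma pos_neg_root: "b \<in> Phi \<Longrightarrow> pos b \<Longrightarrow> pos (- b) \<Longrightarrow> False"
proof -
  assume b: "b \<in> Phi" "pos b" "pos (- b)"
  have "c (- b) = (\<lambda>j. - c b j)" using coeff_scale[of "-1" b] by simp
  then have "\<forall>j. c b j = 0" using b unfolding pos_def by (metis antisym neg_0_le_iff_le)
  then show False using coeff_zero_iff root_nz b by auto
qed

lemma alpha_pos: "pos (alpha i)" unfolding pos_def by (simp add: coeff_alpha)

abbreviation s :: "'i \<Rightarrow> 'a \<Rightarrow> 'a" where "s i \<equiv> refl (alpha i)"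

lemma s_formula: "s i x = x - (2 * (x \<bullet> alpha i) / (alpha i \<bullet> alpha i)) *\<^sub>R alpha i"
  by (simp add: refl_def)

lemma coeff_s: "c (s i x) j = c x j - (if j = i then 2 * (x \<bullet> alpha i) / (alpha i \<bullet> alpha i) else 0)"
  by (simp add: s_formula coeff_diff coeff_scale coeff_alpha)

lemma simple_nonpos: assumes "i \<noteq> j" shows "alpha i \<bullet> alpha j \<le> 0"
proof (rule ccontr)
  assume "\<not> ?thesis"
  then have gt: "alpha j \<bullet> alpha i > 0" by (simp add: inner_commute)
  have m: "2 * (alpha j \<bullet> alpha i) / (alpha i \<bullet> alpha i) > 0" using gt alpha_sq[of i] by simp
  have r: "s i (alpha j) \<in> Phi" using refl_in_Phi alpha_in by auto
  have cj: "c (s i (alpha j)) j = 1" using assms by (simp add: coeff_s coeff_alpha)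
  have ci: "c (s i (alpha j)) i < 0" using assms m by (simp add: coeff_s coeff_alpha)
  show False using root_coeffs[OF r] cj ci by (metis not_le zero_less_one less_le_not_le)
qed

lemma s_pos: assumes b: "b \<in> Phi" "pos b" "b \<noteq> alpha i" shows "pos (s i b)"
proof -
  have "\<exists>j. j \<noteq> i \<and> c b j > 0"
  proof (rule ccontr)
    assume "\<not> ?thesis"
    then have z: "\<forall>j. j \<noteq> i \<longrightarrow> c b j = 0" using b unfolding pos_def by (metis less_eq_real_def)
    have "b = (\<Sum>j\<in>UNIV. c b j *\<^sub>R alpha j)" by (rule coeff_repr)
    also have "\<dots> = c b i *\<^sub>R alpha i"
      by (subst sum.remove[of _ i]) (auto simp: z)
    finally have beq: "b = c b i *\<^sub>R alpha i" .
    then have "c b i *\<^sub>R alpha i \<in> Phi" using b by simp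
    then have "c b i = 1 \<or> c b i = -1" using reduced alpha_in by blast
    moreover have "c b i \<ge> 0" using b unfolding pos_def by auto
    ultimately have "b = alpha i" using beq by auto
    then show False using b by simp
  qed
  then obtain j where j: "j \<noteq> i" "c b j > 0" by blast
  have r: "s i b \<in> Phi" using refl_in_Phi alpha_in b by auto
  have "c (s i b) j > 0" using j by (simp add: coeff_s)
  then show ?thesis using root_coeffs[OF r] unfolding pos_def by (meson not_le)
qed

lemma lam_nonneg: "lam \<bullet> alpha i \<ge> 0"
proof -
  have "2 * (lam \<bullet> alpha i) / (alpha i \<bullet> alpha i) \<ge> 0"
    using dom unfolding dominant_integral_def by (metis Nats_cases of_nat_0_le_iff)
  then show ?thesis using alpha_sq[of i] by (simp add: zero_le_divide_iff)
qed




subsection \<open>Words in simple reflections\<close>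

definition prod :: "'i list \<Rightarrow> 'a \<Rightarrow> 'a" where
  "prod ws = foldr (\<lambda>i f. s i \<circ> f) ws id"

lemma prod_Nil[simp]: "prod [] = id" by (simp add: prod_def)
lemma prod_Cons[simp]: "prod (i # ws) = s i \<circ> prod ws" by (simp add: prod_def)
lemma prod_append[simp]: "prod (ws @ vs) = prod ws \<circ> prod vs"
  by (induction ws) auto

lemma prod_W: "prod ws \<in> weyl_group Phi"
proof (induction ws)
  case Nil then show ?case by (simp only: prod_Nil weyl_id)
next
  case (Cons i ws) then show ?case by (simp only: prod_Cons) (rule weyl_step, auto simp: alpha_in)
qed

lemma prod_props: "linear (prod ws) \<and> (\<forall>x y. prod ws x \<bullet> prod ws y = x \<bullet> y) \<and> prod ws ` Phi \<subseteq> Phi"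
  using weyl_props[OF prod_W] by simp

lemma s_s: "s i \<circ> s i = id" by (auto simp: fun_eq_iff refl_refl)

lemma prod_rev: "prod (rev ws) (prod ws x) = x"
  by (induction ws arbitrary: x) (auto simp: refl_refl)

lemma prod_rev2: "prod ws (prod (rev ws) x) = x"
  using prod_rev[of "rev ws"] by simp

lemma prod_conj: "refl (prod ws (alpha i)) = prod (ws @ [i] @ rev ws)"
proof
  fix y
  have l: "linear (prod ws)" "\<And>x y. prod ws x \<bullet> prod ws y = x \<bullet> y" using prod_props by auto
  have "refl (prod ws (alpha i)) y = refl (prod ws (alpha i)) (prod ws (prod (rev ws) y))"
    using prod_rev2[of ws y] by simp
  also have "\<dots> = prod ws (s i (prod (rev ws) y))" by (rule refl_conj[OF l])
  finally show "refl (prod ws (alpha i)) y = prod (ws @ [i] @ rev ws) y" by simp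
qed

definition hgt :: "'a \<Rightarrow> real" where "hgt x = (\<Sum>j\<in>UNIV. c x j)"

lemma pos_conj_simple:
  assumes "b \<in> Phi" "pos b" shows "\<exists>ws i. b = prod ws (alpha i)"
proof -
  have "\<forall>b. b \<in> Phi \<and> pos b \<and> hgt b = of_int h \<longrightarrow> (\<exists>ws i. b = prod ws (alpha i))" for h :: int
  proof (induction "nat h" arbitrary: h rule: less_induct)
    case less
    show ?case
    proof (intro allI impI)
      fix b assume b: "b \<in> Phi \<and> pos b \<and> hgt b = of_int h"
      show "\<exists>ws i. b = prod ws (alpha i)"
      proof (cases "\<exists>i. b = alpha i")
        case True then show ?thesis by (metis prod_Nil id_apply)
      next
        case False
        have "b \<bullet> b > 0" using b root_nz by auto
        also have "b \<bullet> b = (\<Sum>j\<in>UNIV. c b j * (b \<bullet> alpha j))"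
          by (subst (2) coeff_repr) (simp add: inner_sum_right)
        finally have "\<exists>j. c b j * (b \<bullet> alpha j) > 0"
          by (meson not_le sum_nonpos)
        then obtain j where "c b j * (b \<bullet> alpha j) > 0" by blast
        moreover have "c b j \<ge> 0" using b pos_def by auto
        ultimately have bj: "b \<bullet> alpha j > 0" by (simp add: zero_less_mult_iff)
        define k where "k = 2 * (b \<bullet> alpha j) / (alpha j \<bullet> alpha j)"
        have kpos: "k > 0" using bj alpha_sq[of j] by (simp add: k_def)
        have "k \<in> \<int>" unfolding k_def by (rule integral[OF alpha_in]) (use b in auto)
        then obtain k' where k': "k = of_int k'" by (metis Ints_cases)
        have k'1: "k' \<ge> 1" using kpos k' by simp
        define b' where "b' = s j b"
        have b'P: "b' \<in> Phi" using b alpha_in refl_in_Phi b'_def by auto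
        have b'pos: "pos b'" using s_pos[of b j] b False b'_def by auto
        have "hgt b' = hgt b - k"
          unfolding hgt_def b'_def coeff_s k_def[symmetric] by (simp add: sum_subtractf)
        then have hb': "hgt b' = of_int (h - k')" using b k' by simp
        have "hgt b' \<ge> 0" using b'pos unfolding hgt_def pos_def by (simp add: sum_nonneg)
        then have "h - k' \<ge> 0" using hb' by simp
        then have "nat (h - k') < nat h" using k'1 by simp
        then obtain ws i where "b' = prod ws (alpha i)" using less b'P b'pos hb' by blast
        then have "b = prod (j # ws) (alpha i)" using b'_def refl_refl by (metis comp_apply prod_Cons)
        then show ?thesis by blast
      qed
    qed
  qed
  note IH = this
  have "hgt b \<in> \<int>" unfolding hgt_def using root_coeffs[OF assms(1)] by (auto intro: Ints_sum)
  then obtain h where "hgt b = of_int h" by (auto elim: Ints_cases)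
  then show ?thesis using IH[of h] assms by blast
qed

lemma refl_word: assumes "b \<in> Phi" shows "\<exists>ws. refl b = prod ws"
proof (cases "pos b")
  case True then show ?thesis using pos_conj_simple[OF assms] prod_conj by metis
next
  case False
  then have p: "pos (- b)" using root_pos_or_neg[OF assms] by auto
  have "- b \<in> Phi" using refl_self[OF root_nz[OF assms]] refl_in_Phi[OF assms assms] by simp
  then show ?thesis using pos_conj_simple[OF _ p] prod_conj refl_neg by metis
qed

lemma weyl_word: "w \<in> weyl_group Phi \<Longrightarrow> \<exists>ws. w = prod ws"
proof (induction rule: weyl_group.induct)
  case weyl_id then show ?case by (metis prod_Nil)
next
  case (weyl_step w a)
  then obtain ws vs where "w = prod ws" "refl a = prod vs" using refl_word by blast
  then have "refl a \<circ> w = prod (vs @ ws)" by simp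
  then show ?case by blast
qed

subsection \<open>Deletion and reduced words\<close>

lemma deletion:
  assumes np: "\<not> pos (prod ws (alpha t))"
  shows "\<exists>vs. length vs < length ws + 1 \<and> prod vs = prod (ws @ [t])"
proof -
  define \<beta> where "\<beta> k = prod (drop k ws) (alpha t)" for k
  define K where "K = {k. k \<le> length ws \<and> \<not> pos (\<beta> k)}"
  have "0 \<in> K" using np by (simp add: K_def \<beta>_def)
  have fK: "finite K" by (simp add: K_def)
  define k0 where "k0 = Max K"
  have k0K: "k0 \<in> K" using \<open>0 \<in> K\<close> fK k0_def Max_in by blast
  have "k0 \<noteq> length ws" using k0K alpha_pos by (auto simp: K_def \<beta>_def)
  then have k0l: "k0 < length ws" using k0K by (simp add: K_def)
  have "Suc k0 \<notin> K"
  proof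
    assume "Suc k0 \<in> K"
    then have "Suc k0 \<le> k0" unfolding k0_def using Max_ge[OF fK] by blast
    then show False by simp
  qed
  then have psuc: "pos (\<beta> (Suc k0))" using k0l by (simp add: K_def)
  define j where "j = ws ! k0"
  define u where "u = prod (drop (Suc k0) ws)"
  have dk: "drop k0 ws = j # drop (Suc k0) ws" using k0l by (simp add: j_def Cons_nth_drop_Suc)
  have bk: "\<beta> k0 = s j (\<beta> (Suc k0))" by (simp add: \<beta>_def dk)
  have inP: "\<beta> (Suc k0) \<in> Phi" using prod_props alpha_in unfolding \<beta>_def by blast
  have "\<not> pos (\<beta> k0)" using k0K by (simp add: K_def)
  then have ua: "u (alpha t) = alpha j" using s_pos[OF inP psuc] bk by (auto simp: u_def \<beta>_def)
  have l: "linear u" "\<And>x y. u x \<bullet> u y = x \<bullet> y" using prod_props u_def by auto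
  have key: "s j \<circ> u \<circ> s t = u"
  proof
    fix y
    have "s j (u (s t y)) = u (s t (s t y))" using refl_conj[OF l, of "alpha t" "s t y"] ua by simp
    then show "(s j \<circ> u \<circ> s t) y = u y" by (simp add: refl_refl)
  qed
  have ws: "ws = take k0 ws @ j # drop (Suc k0) ws" using k0l by (simp add: j_def id_take_nth_drop)
  have "prod (ws @ [t]) = prod (take k0 ws) \<circ> (s j \<circ> u \<circ> s t)"
    by (subst ws) (simp add: u_def o_assoc)
  also have "\<dots> = prod (take k0 ws) \<circ> u" by (simp only: key)
  also have "\<dots> = prod (take k0 ws @ drop (Suc k0) ws)" by (simp add: u_def)
  finally show ?thesis using k0l by (intro exI[of _ "take k0 ws @ drop (Suc k0) ws"]) auto
qed

definition reduced :: "'i list \<Rightarrow> bool" where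
  "reduced ws \<longleftrightarrow> (\<forall>vs. prod vs = prod ws \<longrightarrow> length ws \<le> length vs)"

lemma reduced_butlast: "reduced (ws @ [t]) \<Longrightarrow> reduced ws"
  unfolding reduced_def
proof (intro allI impI, rule ccontr)
  fix vs assume r: "\<forall>vs. prod vs = prod (ws @ [t]) \<longrightarrow> length (ws @ [t]) \<le> length vs"
    and e: "prod vs = prod ws" and "\<not> length ws \<le> length vs"
  then have "prod (vs @ [t]) = prod (ws @ [t])" by simp
  then show False using r[rule_format, OF \<open>prod (vs @ [t]) = _\<close>] \<open>\<not> _\<close> by simp
qed

lemma reduced_pos: assumes "reduced (ws @ [t])" shows "pos (prod ws (alpha t))"
proof (rule ccontr)
  assume "\<not> ?thesis"
  then obtain vs where v: "length vs < length ws + 1" "prod vs = prod (ws @ [t])" using deletion by blast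
  have "length (ws @ [t]) \<le> length vs" using assms v(2) unfolding reduced_def by blast
  then show False using v(1) by simp
qed

lemma exists_reduced: "\<exists>ws. prod ws = prod vs \<and> reduced ws"
proof -
  define P where "P n = (\<exists>ws. length ws = n \<and> prod ws = prod vs)" for n
  have "P (length vs)" by (auto simp: P_def)
  then have "P (Least P)" by (rule LeastI)
  then obtain ws where ws: "length ws = Least P" "prod ws = prod vs" by (auto simp: P_def)
  have "reduced ws" unfolding reduced_def
  proof (intro allI impI)
    fix us assume "prod us = prod ws"
    then have "P (length us)" using ws by (auto simp: P_def)
    then show "length ws \<le> length us" using ws Least_le by metis
  qed
  then show ?thesis using ws by blast
qed

lemma dom_reduced: "reduced ws \<Longrightarrow> pos (lam - prod ws lam)"
proof (induction ws rule: rev_induct)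
  case Nil then show ?case by (simp add: pos_def coeff_zero)
next
  case (snoc t ws)
  have r: "reduced ws" using reduced_butlast snoc.prems .
  have p: "pos (prod ws (alpha t))" using reduced_pos snoc.prems .
  define m where "m = 2 * (lam \<bullet> alpha t) / (alpha t \<bullet> alpha t)"
  have m: "m \<ge> 0" using lam_nonneg[of t] alpha_sq[of t] by (simp add: m_def)
  have l: "linear (prod ws)" using prod_props by auto
  have "prod (ws @ [t]) lam = prod ws lam - m *\<^sub>R prod ws (alpha t)"
    by (simp add: s_formula m_def linear_diff[OF l] linear_scale[OF l])
  then have e: "lam - prod (ws @ [t]) lam = (lam - prod ws lam) + m *\<^sub>R prod ws (alpha t)" by simp
  show ?case using snoc.IH[OF r] p m unfolding pos_def e coeff_add coeff_scale by simp
qed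

lemma dom_W: "w \<in> weyl_group Phi \<Longrightarrow> c (w lam) j \<le> c lam j"
proof -
  assume "w \<in> weyl_group Phi"
  then obtain vs where "w = prod vs" using weyl_word by blast
  then obtain ws where "w = prod ws" "reduced ws" using exists_reduced by metis
  then have "pos (lam - w lam)" using dom_reduced by simp
  then show ?thesis unfolding pos_def by (simp add: coeff_diff)
qed




abbreviation "W \<equiv> weyl_group Phi"
abbreviation "P \<equiv> weight_polytope Phi lam"

lemma lam_in_P: "lam \<in> P"
  unfolding weight_polytope_def by (rule hull_inc) (auto intro: image_eqI[of _ _ id] weyl_id)

lemma P_inv: assumes w: "w \<in> W" and x: "x \<in> P" shows "w x \<in> P"
proof -
  have l: "linear w" using weyl_props[OF w] by auto
  have "w ` P = convex hull (w ` (\<lambda>v. v lam) ` W)"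
    unfolding weight_polytope_def by (rule convex_hull_linear_image[OF l])
  also have "\<dots> \<subseteq> P"
    unfolding weight_polytope_def
  proof (rule hull_mono)
    show "w ` (\<lambda>v. v lam) ` W \<subseteq> (\<lambda>v. v lam) ` W"
    proof
      fix y assume "y \<in> w ` (\<lambda>v. v lam) ` W"
      then obtain v where "v \<in> W" "y = w (v lam)" by auto
      then show "y \<in> (\<lambda>v. v lam) ` W" using weyl_comp[OF w \<open>v \<in> W\<close>] by (auto intro!: image_eqI[of _ _ "w \<circ> v"])
    qed
  qed
  finally show ?thesis using x by auto
qed

lemma s_in_P: "x \<in> P \<Longrightarrow> s i x \<in> P"
  using P_inv weyl_refl[of "alpha i" Phi] alpha_in by blast

lemma P_le: assumes "x \<in> P" shows "c x j \<le> c lam j"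
proof -
  obtain w where w: "\<And>x. c x j = w \<bullet> x" using coeff_inner by blast
  have "P \<subseteq> {x. w \<bullet> x \<le> c lam j}"
    unfolding weight_polytope_def
  proof (rule hull_minimal)
    show "(\<lambda>v. v lam) ` W \<subseteq> {x. w \<bullet> x \<le> c lam j}" using dom_W w by (metis (mono_tags, lifting) image_subset_iff mem_Collect_eq)
    show "convex {x. w \<bullet> x \<le> c lam j}" by (rule convex_halfspace_le)
  qed
  then show ?thesis using assms w by auto
qed

lemma F_face_face: "F_face Phi alpha lam I face_of P"
proof -
  obtain om where om: "\<And>j x. c x j = om j \<bullet> x"
    using coeff_inner by metis
  define a where "a = (\<Sum>i\<in>I. om i)"
  define b where "b = (\<Sum>i\<in>I. c lam i)"
  have ax: "a \<bullet> x = (\<Sum>i\<in>I. c x i)" for x by (simp add: a_def om inner_sum_left)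
  have le: "x \<in> P \<Longrightarrow> a \<bullet> x \<le> b" for x unfolding ax b_def by (rule sum_mono) (rule P_le)
  have eq: "F_face Phi alpha lam I = P \<inter> {x. a \<bullet> x = b}"
  proof (intro set_eqI iffI)
    fix x assume "x \<in> F_face Phi alpha lam I"
    then show "x \<in> P \<inter> {x. a \<bullet> x = b}" unfolding F_face_def ax b_def by auto
  next
    fix x assume x: "x \<in> P \<inter> {x. a \<bullet> x = b}"
    have "(\<Sum>i\<in>I. c lam i - c x i) = 0" using x unfolding ax b_def by (simp add: sum_subtractf)
    moreover have "\<forall>i\<in>I. c lam i - c x i \<ge> 0" using P_le x by auto
    ultimately have "\<forall>i\<in>I. c lam i - c x i = 0"
      using sum_nonneg_eq_0_iff[of I "\<lambda>i. c lam i - c x i"] by auto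
    then show "x \<in> F_face Phi alpha lam I" using x unfolding F_face_def by auto
  qed
  show ?thesis unfolding eq
    by (rule face_of_Int_supporting_hyperplane_le) (auto simp: weight_polytope_def le)
qed




abbreviation "adj \<equiv> ext_adj alpha lam"
definition "SI I = insert None (Some ` (- I))"
abbreviation "CI I \<equiv> ext_component alpha lam I"
definition "KI I = {k. Some k \<in> CI I}"
abbreviation "FI I \<equiv> F_face Phi alpha lam I"

lemma CI_def': "CI I = {v \<in> SI I. (None, v) \<in> (induced_rel adj (SI I))\<^sup>*}"
  unfolding ext_component_def component_of_def SI_def by simp

lemma None_CI: "None \<in> CI I" unfolding CI_def' SI_def by simp

lemma CI_sub: "CI I \<subseteq> SI I" unfolding CI_def' by auto

lemma KI_notin: "k \<in> KI I \<Longrightarrow> k \<notin> I"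
  unfolding KI_def using CI_sub by (auto simp: SI_def)

lemma CI_step: "u \<in> CI I \<Longrightarrow> v \<in> SI I \<Longrightarrow> adj u v \<Longrightarrow> v \<in> CI I"
  unfolding CI_def' by (auto intro: rtrancl_into_rtrancl simp: induced_rel_def)

lemma lam_L: assumes "l \<notin> I" "l \<notin> KI I" shows "lam \<bullet> alpha l = 0"
proof (rule ccontr)
  assume "lam \<bullet> alpha l \<noteq> 0"
  then have "lam \<bullet> alpha l > 0" using lam_nonneg[of l] by simp
  then have "adj None (Some l)" by (simp add: ext_adj_def)
  then have "Some l \<in> CI I" using CI_step[OF None_CI] assms by (auto simp: SI_def)
  then show False using assms by (simp add: KI_def)
qed

lemma orth_KL: assumes "k \<in> KI I" "l \<notin> I" "l \<notin> KI I" shows "alpha k \<bullet> alpha l = 0"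
proof (rule ccontr)
  assume ne: "alpha k \<bullet> alpha l \<noteq> 0"
  have "k \<noteq> l" using assms by auto
  then have "adj (Some k) (Some l)" using ne by (simp add: ext_adj_def)
  then have "Some l \<in> CI I" using CI_step assms by (auto simp: SI_def KI_def)
  then show False using assms by (simp add: KI_def)
qed

lemma weyl_fix: "w \<in> weyl_group A \<Longrightarrow> (\<forall>a\<in>A. y \<bullet> a = 0) \<Longrightarrow> w y = y"
  by (induction rule: weyl_group.induct) (auto simp: refl_orth)

lemma weyl_span: "w \<in> weyl_group A \<Longrightarrow> y \<in> span A \<Longrightarrow> w y \<in> span A"
proof (induction rule: weyl_group.induct)
  case weyl_id then show ?case by simp
next
  case (weyl_step w a)
  then have "w y \<in> span A" by simp
  moreover have "a \<in> span A" using weyl_step by (simp add: span_base)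
  ultimately show ?case unfolding refl_def comp_apply by (intro span_diff span_scale)
qed

lemma orth_span: assumes "y \<in> span A" "\<forall>a\<in>A. v \<bullet> a = 0" shows "v \<bullet> y = 0"
proof -
  have "subspace {y. v \<bullet> y = 0}" unfolding subspace_def by (auto simp: inner_add_right)
  then have "span A \<subseteq> {y. v \<bullet> y = 0}" using assms(2) by (intro span_minimal) auto
  then show ?thesis using assms by auto
qed

lemma lemma_one:
  assumes x: "x \<in> FI I" and l0: "l0 \<notin> KI I"
  shows "c x l0 = c lam l0"
proof (cases "l0 \<in> I")
  case True then show ?thesis using x unfolding F_face_def by auto
next
  case False
  define L where "L = {l. l \<notin> I \<and> l \<notin> KI I}"
  have l0L: "l0 \<in> L" using False l0 by (simp add: L_def)
  have xP: "x \<in> P" using x unfolding F_face_def by auto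
  define \<beta> where "\<beta> = lam - x"
  define d where "d = c \<beta>"
  have dnn: "d j \<ge> 0" for j using P_le[OF xP] by (simp add: d_def \<beta>_def coeff_diff)
  have dI: "j \<in> I \<Longrightarrow> d j = 0" for j using x unfolding F_face_def d_def \<beta>_def coeff_diff by auto
  define \<beta>2 where "\<beta>2 = (\<Sum>l\<in>L. d l *\<^sub>R alpha l)"
  define \<beta>1 where "\<beta>1 = \<beta> - \<beta>2"
  have "\<beta>2 = (\<Sum>j\<in>UNIV. (if j \<in> L then d j else 0) *\<^sub>R alpha j)"
    unfolding \<beta>2_def by (simp add: if_distrib[of "\<lambda>r. r *\<^sub>R _"] sum.inter_filter[symmetric] cong: if_cong)
  then have c2: "c \<beta>2 = (\<lambda>j. if j \<in> L then d j else 0)" by (rule coeff_eq)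
  have c1: "c \<beta>1 = (\<lambda>j. if j \<in> L then 0 else d j)"
    unfolding \<beta>1_def coeff_diff c2 d_def by auto
  have b1orth: "\<beta>1 \<bullet> alpha l = 0" if lL: "l \<in> L" for l
  proof -
    have "\<beta>1 \<bullet> alpha l = (\<Sum>j\<in>UNIV. c \<beta>1 j * (alpha j \<bullet> alpha l))"
      by (subst coeff_repr[of \<beta>1]) (simp add: inner_sum_left)
    also have "\<dots> = 0"
    proof (rule sum.neutral, intro ballI)
      fix j
      show "c \<beta>1 j * (alpha j \<bullet> alpha l) = 0"
      proof (cases "j \<in> L")
        case True then show ?thesis by (simp add: c1)
      next
        case jL: False
        show ?thesis
        proof (cases "j \<in> I")
          case True then show ?thesis using jL by (simp add: c1 dI)
        next
          case False
          then have "j \<in> KI I" using jL by (simp add: L_def)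
          then show ?thesis using orth_KL lL by (simp add: L_def)
        qed
      qed
    qed
    finally show ?thesis .
  qed
  have lamL: "l \<in> L \<Longrightarrow> lam \<bullet> alpha l = 0" for l unfolding L_def using lam_L by blast
  define WL where "WL = weyl_group (alpha ` L)"
  have ALsub: "alpha ` L \<subseteq> Phi" using alpha_in by auto
  have fin: "finite WL" unfolding WL_def by (rule weyl_finite[OF ALsub])
  have idWL: "id \<in> WL" unfolding WL_def by (rule weyl_id)
  have xeq: "x = lam - \<beta>1 - \<beta>2" by (simp add: \<beta>1_def \<beta>_def)
  have nn: "c (w \<beta>2) l \<ge> 0" if w: "w \<in> WL" and lL: "l \<in> L" for w l
  proof -
    have wW: "w \<in> W" using weyl_mono[OF w[unfolded WL_def] ALsub] .
    have lw: "linear w" using weyl_props[OF wW] by auto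
    have "w lam = lam" using weyl_fix[OF w[unfolded WL_def]] lamL by auto
    moreover have "w \<beta>1 = \<beta>1" using weyl_fix[OF w[unfolded WL_def]] b1orth by auto
    ultimately have "w x = lam - \<beta>1 - w \<beta>2" unfolding xeq by (simp add: linear_diff[OF lw])
    moreover have "w x \<in> P" using P_inv[OF wW xP] .
    ultimately have "c (lam - \<beta>1 - w \<beta>2) l \<le> c lam l" using P_le by metis
    then show ?thesis using lL by (simp add: coeff_diff c1)
  qed
  define v where "v = (\<Sum>w\<in>WL. w \<beta>2)"
  have vfix: "v \<bullet> alpha l = 0" if lL: "l \<in> L" for l
  proof -
    have "s l v = (\<Sum>w\<in>WL. s l (w \<beta>2))" unfolding v_def by (rule linear_sum[OF refl_linear])
    also have "\<dots> = v" unfolding v_def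
    proof (rule sum.reindex_bij_witness[of _ "\<lambda>w. s l \<circ> w" "\<lambda>w. s l \<circ> w"])
      fix w assume "w \<in> WL"
      show "s l \<circ> (s l \<circ> w) = w" by (auto simp: fun_eq_iff refl_refl)
      show "s l \<circ> w \<in> WL" using \<open>w \<in> WL\<close> lL unfolding WL_def by (auto intro: weyl_step)
      show "(s l \<circ> w) \<beta>2 = s l (w \<beta>2)" by simp
    next
      fix w assume "w \<in> WL"
      show "s l \<circ> (s l \<circ> w) = w" by (auto simp: fun_eq_iff refl_refl)
      show "s l \<circ> w \<in> WL" using \<open>w \<in> WL\<close> lL unfolding WL_def by (auto intro: weyl_step)
    qed
    finally show ?thesis using refl_fixed alpha_nz by blast
  qed
  have b2s: "\<beta>2 \<in> span (alpha ` L)" unfolding \<beta>2_def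
    by (intro span_sum span_scale span_base) auto
  have "v \<in> span (alpha ` L)" unfolding v_def
    by (rule span_sum) (auto simp: WL_def intro: weyl_span[OF _ b2s])
  then have "v \<bullet> v = 0" using orth_span[of v "alpha ` L" v] vfix by auto
  then have "v = 0" by simp
  then have "(\<Sum>w\<in>WL. c (w \<beta>2) l0) = 0" unfolding v_def using coeff_sum[OF fin, of "\<lambda>w. w \<beta>2"] coeff_zero
    by metis
  then have "\<forall>w\<in>WL. c (w \<beta>2) l0 = 0" using sum_nonneg_eq_0_iff[OF fin, of "\<lambda>w. c (w \<beta>2) l0"] nn l0L by auto
  then have "c \<beta>2 l0 = 0" using idWL by fastforce
  then have "d l0 = 0" using c2 l0L by simp
  then show ?thesis by (simp add: d_def \<beta>_def coeff_diff)
qed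




lemma FI_coord: "x \<in> FI I \<Longrightarrow> i \<in> I \<Longrightarrow> c x i = c lam i"
  unfolding F_face_def by auto

lemma FI_P: "x \<in> FI I \<Longrightarrow> x \<in> P"
  unfolding F_face_def by auto

lemma FI_intro: "x \<in> P \<Longrightarrow> (\<And>i. i \<in> I \<Longrightarrow> c x i = c lam i) \<Longrightarrow> x \<in> FI I"
  unfolding F_face_def by auto

lemma lemma_two:
  assumes "k \<in> KI I" shows "\<exists>x\<in>FI I. c x k < c lam k"
proof -
  have "(None, v) \<in> (induced_rel adj (SI I))\<^sup>* \<Longrightarrow> (\<forall>k. v = Some k \<longrightarrow> (\<exists>x\<in>FI I. c x k < c lam k))" for v
  proof (induction rule: rtrancl_induct)
    case base then show ?case by simp
  next
    case (step y z)
    show ?case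
    proof (intro allI impI)
      fix k assume zk: "z = Some k"
      have yS: "y \<in> SI I" and zS: "z \<in> SI I" and a: "adj y z"
        using step(2) by (auto simp: induced_rel_def)
      have kI: "k \<notin> I" using zS zk by (auto simp: SI_def)
      show "\<exists>x\<in>FI I. c x k < c lam k"
      proof (cases y)
        case None
        then have pos: "lam \<bullet> alpha k > 0" using a zk by (simp add: ext_adj_def)
        define x where "x = s k lam"
        have "x \<in> FI I"
        proof (rule FI_intro)
          show "x \<in> P" unfolding x_def by (rule s_in_P[OF lam_in_P])
          fix i assume "i \<in> I"
          then have "i \<noteq> k" using kI by auto
          then show "c x i = c lam i" by (simp add: x_def coeff_s)
        qed
        moreover have "c x k < c lam k" using pos alpha_sq[of k] by (simp add: x_def coeff_s)
        ultimately show ?thesis by blast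
      next
        case (Some j)
        have jk: "j \<noteq> k" and ne: "alpha j \<bullet> alpha k \<noteq> 0" using a zk Some by (auto simp: ext_adj_def)
        have neg: "alpha j \<bullet> alpha k < 0" using simple_nonpos[OF jk] ne by simp
        obtain x where x: "x \<in> FI I" "c x j < c lam j" using step(3) Some by blast
        have xP: "x \<in> P" using FI_P[OF x(1)] .
        show ?thesis
        proof (cases "c x k < c lam k")
          case True then show ?thesis using x by blast
        next
          case False
          then have xk: "c x k = c lam k" using P_le[OF xP, of k] by simp
          define d where "d = c (lam - x)"
          have dnn: "d t \<ge> 0" for t using P_le[OF xP] by (simp add: d_def coeff_diff)
          have dk: "d k = 0" using xk by (simp add: d_def coeff_diff)
          have dj: "d j > 0" using x(2) by (simp add: d_def coeff_diff)
          have "(lam - x) \<bullet> alpha k = (\<Sum>t\<in>UNIV. d t * (alpha t \<bullet> alpha k))"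
            unfolding d_def by (subst coeff_repr[of "lam - x"]) (simp add: inner_sum_left)
          also have "\<dots> = d j * (alpha j \<bullet> alpha k) + (\<Sum>t\<in>UNIV - {j}. d t * (alpha t \<bullet> alpha k))"
            by (subst sum.remove[of _ j]) auto
          also have "\<dots> < 0"
          proof -
            have "d j * (alpha j \<bullet> alpha k) < 0" using dj neg by (simp add: mult_pos_neg)
            moreover have "(\<Sum>t\<in>UNIV - {j}. d t * (alpha t \<bullet> alpha k)) \<le> 0"
            proof (rule sum_nonpos)
              fix t assume "t \<in> UNIV - {j}"
              show "d t * (alpha t \<bullet> alpha k) \<le> 0"
              proof (cases "t = k")
                case True then show ?thesis using dk by simp
              next
                case False then show ?thesis using simple_nonpos[OF False] dnn[of t]
                  by (simp add: mult_nonneg_nonpos)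
              qed
            qed
            ultimately show ?thesis by simp
          qed
          finally have "x \<bullet> alpha k > lam \<bullet> alpha k" by (simp add: inner_diff_left)
          then have xpos: "x \<bullet> alpha k > 0" using lam_nonneg[of k] by simp
          define y where "y = s k x"
          have "y \<in> FI I"
          proof (rule FI_intro)
            show "y \<in> P" unfolding y_def by (rule s_in_P[OF xP])
            fix i assume "i \<in> I"
            then have "i \<noteq> k" using kI by auto
            then show "c y i = c lam i" using FI_coord[OF x(1) \<open>i \<in> I\<close>] by (simp add: y_def coeff_s)
          qed
          moreover have "c y k < c lam k" using xpos alpha_sq[of k] xk by (simp add: y_def coeff_s)
          ultimately show ?thesis by blast
        qed
      qed
    qed
  qed
  moreover have "(None, Some k) \<in> (induced_rel adj (SI I))\<^sup>*" using assms unfolding KI_def CI_def' by simp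
  ultimately show ?thesis by blast
qed

lemma key: "FI I \<subseteq> FI J \<longleftrightarrow> CI I \<subseteq> CI J"
proof
  assume sub: "FI I \<subseteq> FI J"
  have "KI I \<subseteq> KI J"
  proof
    fix k assume k: "k \<in> KI I"
    obtain x where x: "x \<in> FI I" "c x k < c lam k" using lemma_two[OF k] by blast
    show "k \<in> KI J"
    proof (rule ccontr)
      assume "k \<notin> KI J"
      then have "c x k = c lam k" using lemma_one[of x J k] sub x(1) by auto
      then show False using x(2) by simp
    qed
  qed
  then show "CI I \<subseteq> CI J"
  proof -
    assume KK: "KI I \<subseteq> KI J"
    show ?thesis
    proof
      fix v assume v: "v \<in> CI I"
      show "v \<in> CI J"
      proof (cases v)
        case None then show ?thesis using None_CI by simp
      next
        case (Some k) then show ?thesis using v KK by (auto simp: KI_def)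
      qed
    qed
  qed
next
  assume sub: "CI I \<subseteq> CI J"
  then have KK: "KI I \<subseteq> KI J" by (auto simp: KI_def)
  show "FI I \<subseteq> FI J"
  proof
    fix x assume x: "x \<in> FI I"
    show "x \<in> FI J"
    proof (rule FI_intro[OF FI_P[OF x]])
      fix i assume "i \<in> J"
      then have "i \<notin> KI I" using KI_notin KK by blast
      then show "c x i = c lam i" by (rule lemma_one[OF x])
    qed
  qed
qed

lemma adj_sym: "adj u v = adj v u"
  by (cases u; cases v) (auto simp: ext_adj_def inner_commute)

lemma CI_conn: "CI I \<in> conn_subdiagrams_ext alpha lam"
proof -
  define R where "R = induced_rel adj (CI I)"
  have reach: "(None, v) \<in> (induced_rel adj (SI I))\<^sup>* \<Longrightarrow> (None, v) \<in> R\<^sup>*" for v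
  proof (induction rule: rtrancl_induct)
    case base then show ?case by simp
  next
    case (step y z)
    have "y \<in> CI I" "z \<in> CI I" using step(1,2)
      unfolding CI_def' by (auto simp: induced_rel_def intro: rtrancl_into_rtrancl)
    then have "(y, z) \<in> R" using step(2) by (auto simp: R_def induced_rel_def)
    then show ?case using step(3) by (rule rtrancl_into_rtrancl[rotated])
  qed
  have symR: "sym (R\<^sup>*)" by (rule sym_rtrancl) (auto simp: sym_def R_def induced_rel_def adj_sym)
  have "(u, v) \<in> R\<^sup>*" if "u \<in> CI I" "v \<in> CI I" for u v
  proof -
    have "(None, u) \<in> R\<^sup>*" "(None, v) \<in> R\<^sup>*" using that reach unfolding CI_def' by auto
    then have "(u, None) \<in> R\<^sup>*" using symR by (auto simp: sym_def)
    then show ?thesis using \<open>(None, v) \<in> R\<^sup>*\<close> by (rule rtrancl_trans)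
  qed
  then show ?thesis using None_CI
    unfolding conn_subdiagrams_ext_def connected_sub_def R_def by auto
qed

lemma CI_surj: assumes "S \<in> conn_subdiagrams_ext alpha lam" shows "\<exists>I. S = CI I"
proof -
  define I where "I = {i. Some i \<notin> S}"
  have NS: "None \<in> S" and con: "connected_sub adj S" using assms by (auto simp: conn_subdiagrams_ext_def)
  have SS: "SI I = S"
  proof (intro set_eqI iffI)
    fix v assume "v \<in> SI I" then show "v \<in> S" using NS by (auto simp: SI_def I_def)
  next
    fix v assume "v \<in> S" then show "v \<in> SI I" by (cases v) (auto simp: SI_def I_def)
  qed
  have "CI I = S" unfolding CI_def' SS using con NS unfolding connected_sub_def by auto
  then show ?thesis by metis
qed

lemma main:
  "\<exists>\<phi>. bij_betw \<phi> (std_parabolic_faces Phi alpha lam) (conn_subdiagrams_ext alpha lam)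
           \<and> (\<forall>I. \<phi> (F_face Phi alpha lam I) = ext_component alpha lam I)
           \<and> (\<forall>F\<in>std_parabolic_faces Phi alpha lam. \<forall>G\<in>std_parabolic_faces Phi alpha lam.
                F \<subseteq> G \<longleftrightarrow> \<phi> F \<subseteq> \<phi> G)"
proof -
  define \<phi> where "\<phi> F = CI (SOME I. F = FI I)" for F
  have phiI: "\<phi> (FI I) = CI I" for I
  proof -
    have "FI I = FI (SOME J. FI I = FI J)" by (rule someI[of "\<lambda>J. FI I = FI J" I]) simp
    then show ?thesis unfolding \<phi>_def using key by (metis subset_antisym order_refl)
  qed
  have dom: "std_parabolic_faces Phi alpha lam = range FI"
    unfolding std_parabolic_faces_def using F_face_face by auto
  have bij: "bij_betw \<phi> (std_parabolic_faces Phi alpha lam) (conn_subdiagrams_ext alpha lam)"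
    unfolding bij_betw_def dom
  proof
    show "inj_on \<phi> (range FI)"
    proof (rule inj_onI)
      fix F G assume "F \<in> range FI" "G \<in> range FI" "\<phi> F = \<phi> G"
      then obtain I J where "F = FI I" "G = FI J" "CI I = CI J" using phiI by auto
      then show "F = G" using key by (metis subset_antisym order_refl)
    qed
    show "\<phi> ` range FI = conn_subdiagrams_ext alpha lam"
    proof
      show "\<phi> ` range FI \<subseteq> conn_subdiagrams_ext alpha lam" using phiI CI_conn by auto
      show "conn_subdiagrams_ext alpha lam \<subseteq> \<phi> ` range FI"
      proof
        fix S assume "S \<in> conn_subdiagrams_ext alpha lam"
        then obtain I where "S = CI I" using CI_surj by blast
        then show "S \<in> \<phi> ` range FI" using phiI by (metis rangeI image_eqI)
      qed
    qed
  qed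
  have ord: "\<forall>F\<in>std_parabolic_faces Phi alpha lam. \<forall>G\<in>std_parabolic_faces Phi alpha lam.
                F \<subseteq> G \<longleftrightarrow> \<phi> F \<subseteq> \<phi> G"
    unfolding dom using phiI key by auto
  show ?thesis using bij phiI ord by blast
qed

end

theorem theorem4p5:
  fixes Phi :: "'a::euclidean_space set" and alpha :: "'i::finite \<Rightarrow> 'a" and lam :: 'a
  assumes "irreducible_root_system Phi"
    and "is_base Phi alpha"
    and "dominant_integral alpha lam"
  shows "\<exists>\<phi>. bij_betw \<phi> (std_parabolic_faces Phi alpha lam) (conn_subdiagrams_ext alpha lam)
           \<and> (\<forall>I. \<phi> (F_face Phi alpha lam I) = ext_component alpha lam I)
           \<and> (\<forall>F\<in>std_parabolic_faces Phi alpha lam. \<forall>G\<in>std_parabolic_faces Phi alpha lam.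
                F \<subseteq> G \<longleftrightarrow> \<phi> F \<subseteq> \<phi> G)"
proof -
  interpret RS Phi alpha lam using assms by unfold_locales
  show ?thesis by (rule main)
qed

end
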